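(* For every $n\in\mathbb{N}$, $A_n(p,q,t)=A_n(q,p,t)$, where $$A_n(p,q,t)=\sum_{\pi\in\mathfrak{S}_n}p^{(13\text{-}2)(\pi)}q^{(2\text{-}31)(\pi)}t^{\operatorname{des}(\pi)}.$$
   Context: For $\pi=a_1\cdots a_n\in\mathfrak{S}_n$: $\operatorname{des}(\pi)=|\{i\in[n-1]:a_i>a_{i+1}\}|$; $(2\text{-}31)(\pi)$ is the number of pairs $1\le i<j\le n-1$ with $a_{j+1}<a_i<a_j$; $(13\text{-}2)(\pi)$ is the number of pairs $2\le i<j\le n$ with $a_{i-1}<a_j<a_i$. *)

theory Defs
  imports "HOL-Combinatorics.Multiset_Permutations"
begin

(* A permutation pi = a_1 ... a_n of [n] = {1..n} is represented as the list
   [a_1, ..., a_n]; positions are 1-based in the paper, so a_i = pi ! (i - 1). *)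

definition perms :: "nat \<Rightarrow> nat list set" where
  "perms n = permutations_of_set {1..n}"

definition des :: "nat list \<Rightarrow> nat" where
  "des \<pi> = card {i \<in> {1..length \<pi> - 1}. \<pi> ! (i - 1) > \<pi> ! i}"

definition pat_2_31 :: "nat list \<Rightarrow> nat" where
  "pat_2_31 \<pi> = card {(i, j). 1 \<le> i \<and> i < j \<and> j \<le> length \<pi> - 1 \<and>
      \<pi> ! j < \<pi> ! (i - 1) \<and> \<pi> ! (i - 1) < \<pi> ! (j - 1)}"

definition pat_13_2 :: "nat list \<Rightarrow> nat" where
  "pat_13_2 \<pi> = card {(i, j). 2 \<le> i \<and> i < j \<and> j \<le> length \<pi> \<and>
      \<pi> ! (i - 2) < \<pi> ! (j - 1) \<and> \<pi> ! (j - 1) < \<pi> ! (i - 1)}"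

definition A_poly :: "nat \<Rightarrow> 'a::comm_semiring_1 \<Rightarrow> 'a \<Rightarrow> 'a \<Rightarrow> 'a" where
  "A_poly n p q t = (\<Sum>\<pi>\<in>perms n. p ^ pat_13_2 \<pi> * q ^ pat_2_31 \<pi> * t ^ des \<pi>)"

end

theory Submission
  imports Defs
begin


fun pc :: "(nat \<Rightarrow> nat \<Rightarrow> bool) \<Rightarrow> nat list \<Rightarrow> nat" where
  "pc P (x # y # zs) = (if P x y then 1 else 0) + pc P (y # zs)"
| "pc P _ = 0"

fun noadj :: "nat list \<Rightarrow> bool" where
  "noadj (x # y # zs) = (\<not> (x = 0 \<and> y = 0) \<and> noadj (y # zs))"
| "noadj _ = True"

lemma pc_Cons: "pc P (x # xs) = (if xs \<noteq> [] \<and> P x (hd xs) then 1 else 0) + pc P xs"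
  by (cases xs) auto

lemma noadj_Cons: "noadj (x # xs) = (\<not> (xs \<noteq> [] \<and> x = 0 \<and> hd xs = 0) \<and> noadj xs)"
  by (cases xs) auto

lemma pc_append: "pc P (xs @ ys) = pc P xs + pc P ys +
   (if xs \<noteq> [] \<and> ys \<noteq> [] \<and> P (last xs) (hd ys) then 1 else 0)"
  by (induction xs) (auto simp: pc_Cons)

lemma noadj_append: "noadj (xs @ ys) = (noadj xs \<and> noadj ys \<and>
   \<not> (xs \<noteq> [] \<and> ys \<noteq> [] \<and> last xs = 0 \<and> hd ys = 0))"
  by (induction xs) (auto simp: noadj_Cons)

lemma pc_zero: "(\<forall>x\<in>set r. \<forall>y\<in>set r. \<not> P x y) \<Longrightarrow> pc P r = 0"
  by (induction r) (auto simp: pc_Cons)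

lemma pc_cong: "(\<And>x y. x \<in> set xs \<Longrightarrow> y \<in> set xs \<Longrightarrow> P x y = Q x y) \<Longrightarrow> pc P xs = pc Q xs"
  by (induction xs) (auto simp: pc_Cons)

lemma pc_replace:
  assumes "\<forall>e\<in>set r. \<forall>y. P e y = P z y \<and> P y e = P y z" "\<not> P z z" "r \<noteq> []"
  shows "pc P (xs @ r @ ys) = pc P (xs @ z # ys)"
proof -
  have "pc P r = 0" using assms by (intro pc_zero) metis
  moreover have "P (last r) y = P z y" for y using assms by auto
  moreover have "P y (hd r) = P y z" for y using assms by auto
  ultimately show ?thesis using assms(3)
    by (simp add: pc_append pc_Cons)
qed

lemma count_first:
  "noadj xs \<Longrightarrow> pc (\<lambda>x y. x \<noteq> 0 \<and> y = 0) xs + (if xs \<noteq> [] \<and> hd xs = 0 then 1 else 0) = count_list xs 0"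
  by (induction xs rule: noadj.induct) auto

lemma count_last:
  "noadj xs \<Longrightarrow> pc (\<lambda>x y. x = 0 \<and> y \<noteq> 0) xs + (if xs \<noteq> [] \<and> last xs = 0 then 1 else 0) = count_list xs 0"
  by (induction xs rule: noadj.induct) auto

definition SP :: "nat list \<Rightarrow> (nat list \<times> nat list) set" where
  "SP w = {(a, b). w = a @ 0 # b}"

lemma SP_surj: "i < count_list w 0 \<Longrightarrow> \<exists>a b. w = a @ 0 # b \<and> count_list a 0 = i"
proof (induction w arbitrary: i)
  case Nil then show ?case by simp
next
  case (Cons y w)
  show ?case
  proof (cases "y = 0")
    case True
    show ?thesis
    proof (cases i)
      case 0 then show ?thesis using True by (intro exI[of _ "[]"] exI[of _ w]) auto
    next
      case (Suc j)
      then have "j < count_list w 0" using Cons True by simp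
      then obtain a b where "w = a @ 0 # b" "count_list a 0 = j" using Cons by blast
      then show ?thesis using True Suc by (intro exI[of _ "y # a"] exI[of _ b]) auto
    qed
  next
    case False
    then have "i < count_list w 0" using Cons by simp
    then obtain a b where "w = a @ 0 # b" "count_list a 0 = i" using Cons by blast
    then show ?thesis using False by (intro exI[of _ "y # a"] exI[of _ b]) auto
  qed
qed

lemma SP_inj_aux: "a1 @ x # b1 = a2 @ x # b2 \<Longrightarrow> length a1 < length a2 \<Longrightarrow>
   count_list a1 x < count_list a2 x"
proof (induction a1 arbitrary: a2)
  case Nil
  then obtain a2' where "a2 = x # a2'" by (cases a2) auto
  then show ?case by simp
next
  case (Cons z a1)
  then obtain a2' where a2: "a2 = z # a2'" by (cases a2) auto
  then show ?case using Cons.IH[of a2'] Cons.prems by simp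
qed

lemma SP_bij: "bij_betw (\<lambda>(a, b). count_list a 0) (SP w) {..<count_list w 0}"
proof (rule bij_betw_imageI)
  show "inj_on (\<lambda>(a, b). count_list a 0) (SP w)"
  proof (rule inj_onI, clarsimp simp: SP_def)
    fix a1 b1 a2 b2 assume h: "a1 @ 0 # b1 = a2 @ 0 # b2" "count_list a1 0 = count_list a2 0"
    have "length a1 = length a2"
      using SP_inj_aux[OF h(1)] SP_inj_aux[OF h(1)[symmetric]] h(2)
      by (metis less_irrefl nat_neq_iff)
    then show "a1 = a2 \<and> b1 = b2" using h(1) by simp
  qed
  show "(\<lambda>(a, b). count_list a 0) ` SP w = {..<count_list w 0}"
  proof
    show "(\<lambda>(a, b). count_list a 0) ` SP w \<subseteq> {..<count_list w 0}"
      by (auto simp: SP_def)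
    show "{..<count_list w 0} \<subseteq> (\<lambda>(a, b). count_list a 0) ` SP w"
      using SP_surj by (force simp: SP_def image_iff)
  qed
qed

lemma SP_finite: "finite (SP w)"
  using SP_bij bij_betw_finite by blast



definition Wk :: "nat \<Rightarrow> nat list set" where
  "Wk k = {w. w \<noteq> [] \<and> hd w = 0 \<and> last w = 0 \<and> noadj w \<and>
     distinct (filter (\<lambda>x. x \<noteq> 0) w) \<and> set w = {0..k}}"

definition ins :: "nat \<Rightarrow> (nat list \<times> nat list) \<times> bool \<times> bool \<Rightarrow> nat list" where
  "ins m c = (case c of ((a, b), (e0, e1)) \<Rightarrow>
     a @ (if e0 then [0] else []) @ m # (if e1 then [0] else []) @ b)"

definition Ch :: "nat list \<Rightarrow> ((nat list \<times> nat list) \<times> bool \<times> bool) set" where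
  "Ch w = {c \<in> SP w \<times> UNIV. case c of ((a, b), (e0, e1)) \<Rightarrow> (\<not> e0 \<longrightarrow> a \<noteq> []) \<and> (\<not> e1 \<longrightarrow> b \<noteq> [])}"

definition dec :: "nat \<Rightarrow> nat list \<Rightarrow> nat list \<times> (nat list \<times> nat list) \<times> bool \<times> bool" where
  "dec m w = (let u = takeWhile (\<lambda>x. x \<noteq> m) w; s = tl (dropWhile (\<lambda>x. x \<noteq> m) w);
      e0 = (u \<noteq> [] \<and> last u = 0); e1 = (s \<noteq> [] \<and> hd s = 0);
      a = (if e0 then butlast u else u); b = (if e1 then tl s else s)
    in (a @ 0 # b, ((a, b), (e0, e1))))"

lemma bl0: "u \<noteq> [] \<Longrightarrow> last u = 0 \<Longrightarrow> butlast u @ 0 # xs = u @ xs"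
  by (metis append.assoc append_Cons append_Nil append_butlast_last_id)

lemma bl0': "u \<noteq> [] \<Longrightarrow> last u = 0 \<Longrightarrow> butlast u @ [0] = u"
  by (metis append_butlast_last_id)

lemma hl0: "s \<noteq> [] \<Longrightarrow> hd s = 0 \<Longrightarrow> 0 # tl s = s"
  by (metis list.collapse)

lemma ins_remove: "Suc k \<notin> A \<Longrightarrow> insert (Suc k) A = {0..Suc k} \<Longrightarrow> A = {0..k}"
proof -
  assume a: "Suc k \<notin> A" "insert (Suc k) A = {0..Suc k}"
  then have "A = {0..Suc k} - {Suc k}" by auto
  also have "\<dots> = {0..k}" by auto
  finally show ?thesis .
qed

lemma aux0: "(0::nat) \<in> S \<union> Z \<Longrightarrow> S \<union> {0} = K \<Longrightarrow> Z \<subseteq> {0} \<Longrightarrow> S \<union> Z = K"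
  by auto

lemma tw_split: "v \<notin> set u \<Longrightarrow> takeWhile (\<lambda>x. x \<noteq> v) (u @ v # s) = u"
  by (induction u) auto

lemma dw_split: "v \<notin> set u \<Longrightarrow> tl (dropWhile (\<lambda>x. x \<noteq> v) (u @ v # s)) = s"
  by (induction u) auto

lemma ins_eq: "ins m ((a, b), (e0, e1)) = (a @ (if e0 then [0] else [])) @ m # ((if e1 then [0] else []) @ b)"
  by (simp add: ins_def)

lemma dec_ins:
  assumes w: "w \<in> Wk k" and c: "((a, b), (e0, e1)) \<in> Ch w"
  shows "dec (Suc k) (ins (Suc k) ((a, b), (e0, e1))) = (w, ((a, b), (e0, e1)))"
proof -
  have wab: "w = a @ 0 # b" and v0: "\<not> e0 \<longrightarrow> a \<noteq> []" and v1: "\<not> e1 \<longrightarrow> b \<noteq> []"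
    using c by (auto simp: Ch_def SP_def)
  have sw: "set w = {0..k}" and nw: "noadj w" using w by (auto simp: Wk_def)
  have "x \<in> set a \<Longrightarrow> x \<le> k" for x using sw wab by auto
  then have ma: "Suc k \<notin> set (a @ (if e0 then [0] else []))" by (auto, meson Suc_n_not_le_n)
  have la: "a \<noteq> [] \<Longrightarrow> last a \<noteq> 0" using nw wab by (simp add: noadj_append)
  have hb: "b \<noteq> [] \<Longrightarrow> hd b \<noteq> 0" using nw wab by (simp add: noadj_append noadj_Cons)
  show ?thesis
    unfolding ins_eq dec_def Let_def tw_split[OF ma] dw_split[OF ma]
    using v0 v1 la hb wab by auto
qed

lemma ins_dec:
  assumes w: "w \<in> Wk (Suc k)"
  shows "ins (Suc k) (snd (dec (Suc k) w)) = w"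
proof -
  have "Suc k \<in> set w" using w by (auto simp: Wk_def)
  then obtain u s where us: "w = u @ Suc k # s" "Suc k \<notin> set u" by (meson split_list_first)
  show ?thesis
    unfolding dec_def Let_def us tw_split[OF us(2)] dw_split[OF us(2)]
    by (auto simp: ins_def bl0 hl0)
qed

lemma dec_split:
  assumes w: "w \<in> Wk (Suc k)"
  obtains a b e0 e1 where "dec (Suc k) w = (a @ 0 # b, ((a, b), (e0, e1)))"
  by (auto simp: dec_def Let_def)

lemma ins_in:
  assumes w: "w \<in> Wk k" and c: "((a, b), (e0, e1)) \<in> Ch w"
  shows "ins (Suc k) ((a, b), (e0, e1)) \<in> Wk (Suc k)"
proof -
  have wab: "w = a @ 0 # b" and v0: "\<not> e0 \<longrightarrow> a \<noteq> []" and v1: "\<not> e1 \<longrightarrow> b \<noteq> []"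
    using c by (auto simp: Ch_def SP_def)
  have w': "hd w = 0" "last w = 0" "noadj w" "distinct (filter (\<lambda>x. x \<noteq> 0) w)" "set w = {0..k}"
    using w by (auto simp: Wk_def)
  have "x \<in> set a \<Longrightarrow> x \<le> k" "x \<in> set b \<Longrightarrow> x \<le> k" for x using w'(5) wab by auto
  then have mab: "Suc k \<notin> set a" "Suc k \<notin> set b" by (meson Suc_n_not_le_n)+
  have la: "a \<noteq> [] \<Longrightarrow> last a \<noteq> 0" using w'(3) wab by (simp add: noadj_append)
  have hb: "b \<noteq> [] \<Longrightarrow> hd b \<noteq> 0" using w'(3) wab by (simp add: noadj_append noadj_Cons)
  have ha: "a \<noteq> [] \<Longrightarrow> hd a = 0" using w'(1) wab by simp
  have lb: "b \<noteq> [] \<Longrightarrow> last b = 0" using w'(2) wab by simp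
  have na: "noadj a" "noadj b" using w'(3) wab by (auto simp: noadj_append noadj_Cons)
  let ?x = "ins (Suc k) ((a, b), (e0, e1))"
  have "?x \<noteq> []" by (simp add: ins_def)
  moreover have "hd ?x = 0" using v0 ha by (cases a) (auto simp: ins_def)
  moreover have "last ?x = 0" using v1 lb by (auto simp: ins_def)
  moreover have "noadj ?x" using na la hb v0 v1
    by (cases "a = []"; cases "b = []") (auto simp: ins_def noadj_append noadj_Cons)
  moreover have "distinct (filter (\<lambda>x. x \<noteq> 0) ?x)" using w'(4) wab mab
    by (auto simp: ins_def)
  moreover have "set ?x = {0..Suc k}"
  proof -
    have h0: "0 \<in> set a \<union> set b \<union> (if e0 \<or> e1 then {0} else {})"
      using v0 ha by (cases a) auto
    have h1: "set a \<union> set b \<union> {0} = {0..k}" using w'(5) wab by auto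
    have h2: "(if e0 \<or> e1 then {0} else {}) \<subseteq> {0::nat}" by simp
    have S1: "set a \<union> set b \<union> (if e0 \<or> e1 then {0} else {}) = {0..k}"
      using aux0[OF h0 h1 h2] .
    have S2: "set ?x = insert (Suc k) (set a \<union> set b \<union> (if e0 \<or> e1 then {0} else {}))"
      by (auto simp: ins_def)
    show ?thesis unfolding S2 S1 by auto
  qed
  ultimately show ?thesis by (simp add: Wk_def)
qed

lemma dec_in:
  assumes w: "w \<in> Wk (Suc k)"
  shows "dec (Suc k) w \<in> Sigma (Wk k) Ch"
proof -
  have w': "w \<noteq> []" "hd w = 0" "last w = 0" "noadj w" "distinct (filter (\<lambda>x. x \<noteq> 0) w)" "set w = {0..Suc k}"
    using w by (auto simp: Wk_def)
  have "Suc k \<in> set w" using w by (auto simp: Wk_def)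
  then obtain u s where us: "w = u @ Suc k # s" "Suc k \<notin> set u" by (meson split_list_first)
  define e0 where "e0 = (u \<noteq> [] \<and> last u = 0)"
  define e1 where "e1 = (s \<noteq> [] \<and> hd s = 0)"
  define a where "a = (if e0 then butlast u else u)"
  define b where "b = (if e1 then tl s else s)"
  have d: "dec (Suc k) w = (a @ 0 # b, ((a, b), (e0, e1)))"
    unfolding dec_def Let_def us tw_split[OF us(2)] dw_split[OF us(2)] e0_def e1_def a_def b_def
    by simp
  have une: "u \<noteq> []" using w'(2) us by auto
  have sne: "s \<noteq> []" using w'(3) us by auto
  have ua: "u = a @ (if e0 then [0] else [])"
  proof (cases e0)
    case True then show ?thesis using bl0'[of u] une unfolding a_def e0_def by simp
  next
    case False then show ?thesis unfolding a_def by simp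
  qed
  have sb: "s = (if e1 then [0] else []) @ b" unfolding b_def e1_def using sne hl0[of s] by auto
  have la: "\<not> e0 \<Longrightarrow> a \<noteq> [] \<and> last a \<noteq> 0" using une unfolding a_def e0_def by auto
  have hb: "\<not> e1 \<Longrightarrow> b \<noteq> [] \<and> hd b \<noteq> 0" using sne unfolding b_def e1_def by auto
  have wi: "w = a @ (if e0 then [0] else []) @ Suc k # (if e1 then [0] else []) @ b"
    using us ua sb by simp
  have la2: "a \<noteq> [] \<Longrightarrow> last a \<noteq> 0"
    using la w'(4) wi by (cases e0) (auto simp: noadj_append)
  have hb2: "b \<noteq> [] \<Longrightarrow> hd b \<noteq> 0"
    using hb w'(4) wi by (cases e1) (auto simp: noadj_append noadj_Cons)
  have ha: "a \<noteq> [] \<Longrightarrow> hd a = 0" using w'(2) wi by simp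
  have lb: "b \<noteq> [] \<Longrightarrow> last b = 0" using w'(3) wi by simp
  have na: "noadj a" "noadj b" using w'(4) wi by (auto simp: noadj_append noadj_Cons)
  have mab: "Suc k \<notin> set a" "Suc k \<notin> set b" using w'(5) wi by auto
  have "a @ 0 # b \<in> Wk k"
  proof -
    have "hd (a @ 0 # b) = 0" using ha by (cases a) auto
    moreover have "last (a @ 0 # b) = 0" using lb by (cases b) auto
    moreover have "noadj (a @ 0 # b)" using na la2 hb2 by (cases "a = []"; cases "b = []") (auto simp: noadj_append noadj_Cons)
    moreover have "distinct (filter (\<lambda>x. x \<noteq> 0) (a @ 0 # b))" using w'(5) wi by auto
    moreover have "set (a @ 0 # b) = {0..k}"
    proof -
      have "set w = set a \<union> set b \<union> {Suc k} \<union> (if e0 \<or> e1 then {0} else {})"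
        using wi by auto
      then have "set a \<union> set b \<union> {Suc k} \<union> (if e0 \<or> e1 then {0} else {}) = {0..Suc k}"
        using w'(6) by simp
      then have A: "insert (Suc k) (set a \<union> set b \<union> (if e0 \<or> e1 then {0} else {})) = {0..Suc k}"
        by auto
      have B: "Suc k \<notin> set a \<union> set b \<union> (if e0 \<or> e1 then {0} else {})" using mab by auto
      have C: "set a \<union> set b \<union> (if e0 \<or> e1 then {0} else {}) = {0..k}"
        using ins_remove[OF B A] .
      then have "0 \<in> set a \<union> set b \<union> (if e0 \<or> e1 then {0} else {})" by auto
      then show ?thesis using C by (auto split: if_splits)
    qed
    ultimately show ?thesis by (simp add: Wk_def)
  qed
  moreover have "((a, b), (e0, e1)) \<in> Ch (a @ 0 # b)"
    using la hb by (auto simp: Ch_def SP_def)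
  ultimately show ?thesis using d by simp
qed

lemma W_bij: "bij_betw (\<lambda>(w, c). ins (Suc k) c) (Sigma (Wk k) Ch) (Wk (Suc k))"
proof (rule bij_betw_byWitness[where f' = "dec (Suc k)"])
  show "\<forall>x\<in>Sigma (Wk k) Ch. dec (Suc k) (case x of (w, c) \<Rightarrow> ins (Suc k) c) = x"
    using dec_ins by force
  show "\<forall>y\<in>Wk (Suc k). (case dec (Suc k) y of (w, c) \<Rightarrow> ins (Suc k) c) = y"
    using ins_dec by (simp add: case_prod_beta)
  show "(\<lambda>(w, c). ins (Suc k) c) ` Sigma (Wk k) Ch \<subseteq> Wk (Suc k)"
    using ins_in by force
  show "dec (Suc k) ` Wk (Suc k) \<subseteq> Sigma (Wk k) Ch"
    using dec_in by blast
qed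

lemma W0: "Wk 0 = {[0]}"
proof -
  have "w = [0]" if "w \<in> Wk 0" for w
  proof -
    have "set w = {0}" "w \<noteq> []" "noadj w" using that by (auto simp: Wk_def)
    then show ?thesis
      by (induction w rule: noadj.induct) auto
  qed
  then show ?thesis by (auto simp: Wk_def)
qed

lemma Ch_finite: "finite (Ch w)"
  unfolding Ch_def using SP_finite by auto

lemma W_finite: "finite (Wk k)"
proof (induction k)
  case 0 then show ?case by (simp add: W0)
next
  case (Suc k)
  have "finite (Sigma (Wk k) Ch)" using Suc Ch_finite by auto
  then show ?case using W_bij bij_betw_finite by blast
qed



definition small :: "nat \<Rightarrow> nat \<Rightarrow> bool" where "small v x = (x \<noteq> 0 \<and> x < v)"
definition big :: "nat \<Rightarrow> nat \<Rightarrow> bool" where "big v y = (y = 0 \<or> v < y)"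

definition UL :: "nat list \<Rightarrow> nat \<Rightarrow> nat" where
  "UL w v = pc (\<lambda>x y. small v x \<and> big v y) (takeWhile (\<lambda>x. x \<noteq> v) w)"
definition DR :: "nat list \<Rightarrow> nat \<Rightarrow> nat" where
  "DR w v = pc (\<lambda>x y. big v x \<and> small v y) (tl (dropWhile (\<lambda>x. x \<noteq> v) w))"
definition DB :: "nat list \<Rightarrow> nat \<Rightarrow> nat" where
  "DB w v = (let s = tl (dropWhile (\<lambda>x. x \<noteq> v) w) in if s \<noteq> [] \<and> small v (hd s) then 1 else 0)"

definition trm :: "'a::comm_semiring_1 \<Rightarrow> 'a \<Rightarrow> 'a \<Rightarrow> nat list \<Rightarrow> nat \<Rightarrow> 'a" where
  "trm p q t w v = p ^ UL w v * q ^ DR w v * t ^ DB w v"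

definition wt :: "'a::comm_semiring_1 \<Rightarrow> 'a \<Rightarrow> 'a \<Rightarrow> nat list \<Rightarrow> 'a" where
  "wt p q t w = (\<Prod>v\<in>set w - {0}. trm p q t w v)"

lemma stats_split:
  assumes "v \<notin> set u"
  shows "UL (u @ v # s) v = pc (\<lambda>x y. small v x \<and> big v y) u"
    "DR (u @ v # s) v = pc (\<lambda>x y. big v x \<and> small v y) s"
    "DB (u @ v # s) v = (if s \<noteq> [] \<and> small v (hd s) then 1 else 0)"
  using assms by (simp_all add: UL_def DR_def DB_def tw_split dw_split)

lemma loc_same:
  assumes w: "w \<in> Wk k" and c: "((a, b), (e0, e1)) \<in> Ch w" and v: "v \<in> set w" "v \<noteq> 0"
  defines "x \<equiv> ins (Suc k) ((a, b), (e0, e1))"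
  shows "UL x v = UL w v \<and> DR x v = DR w v \<and> DB x v = DB w v"
proof -
  have wab: "w = a @ 0 # b" using c by (auto simp: Ch_def SP_def)
  have sw: "set w = {0..k}" and dw: "distinct (filter (\<lambda>x. x \<noteq> 0) w)" using w by (auto simp: Wk_def)
  have vk: "v < Suc k" using v sw by auto
  define r where "r = (if e0 then [0] else []) @ Suc k # (if e1 then [0] else [])"
  have xr: "x = a @ r @ b" unfolding x_def r_def ins_def by simp
  have rne: "r \<noteq> []" by (simp add: r_def)
  have rs: "e \<in> set r \<Longrightarrow> e = 0 \<or> e = Suc k" for e by (auto simp: r_def split: if_splits)
  have ehelp: "e \<in> set r \<Longrightarrow> big v e \<and> \<not> small v e" for e
    using rs[of e] vk by (auto simp: big_def small_def)
  have "v \<in> set a \<or> v \<in> set b" using v wab by auto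
  then show ?thesis
  proof
    assume "v \<in> set a"
    then obtain a1 a2 where a: "a = a1 @ v # a2" "v \<notin> set a1" by (meson split_list_first)
    have e1: "w = a1 @ v # (a2 @ 0 # b)" using wab a by simp
    have e2: "x = a1 @ v # (a2 @ r @ b)" using xr a by simp
    have "pc (\<lambda>x y. big v x \<and> small v y) (a2 @ r @ b) = pc (\<lambda>x y. big v x \<and> small v y) (a2 @ 0 # b)"
      by (rule pc_replace) (use ehelp rne in \<open>auto simp: big_def small_def\<close>)
    moreover have "small v (hd (a2 @ r @ b)) = small v (hd (a2 @ 0 # b))"
      using ehelp[of "hd r"] rne by (cases a2) (auto simp: small_def)
    ultimately show ?thesis unfolding e1 e2 stats_split[OF a(2)] by (simp add: small_def)
  next
    assume vb: "v \<in> set b"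
    have va: "v \<notin> set a" using dw vb v(2) wab by auto
    obtain b1 b2 where b: "b = b1 @ v # b2" "v \<notin> set b1" using vb by (meson split_list_first)
    have e1: "w = (a @ 0 # b1) @ v # b2" using wab b by simp
    have e2: "x = (a @ r @ b1) @ v # b2" using xr b by simp
    have n1: "v \<notin> set (a @ 0 # b1)" using va b v(2) by auto
    have n2: "v \<notin> set (a @ r @ b1)" using va b v(2) rs vk by auto
    have "pc (\<lambda>x y. small v x \<and> big v y) (a @ r @ b1) = pc (\<lambda>x y. small v x \<and> big v y) (a @ 0 # b1)"
      by (rule pc_replace) (use ehelp rne in \<open>auto simp: big_def small_def\<close>)
    then show ?thesis unfolding e1 e2 stats_split[OF n1] stats_split[OF n2] by simp
  qed
qed

lemma loc_new:
  assumes w: "w \<in> Wk k" and c: "((a, b), (e0, e1)) \<in> Ch w"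
  defines "x \<equiv> ins (Suc k) ((a, b), (e0, e1))"
  shows "UL x (Suc k) = count_list a 0 + (if e0 then 1 else 0) - 1"
    "DR x (Suc k) = count_list b 0 + (if e1 then 1 else 0) - 1"
    "DB x (Suc k) = (if e1 then 0 else 1)"
proof -
  have wab: "w = a @ 0 # b" and v0: "\<not> e0 \<longrightarrow> a \<noteq> []" and v1: "\<not> e1 \<longrightarrow> b \<noteq> []"
    using c by (auto simp: Ch_def SP_def)
  have sw: "set w = {0..k}" and nw: "noadj w" using w by (auto simp: Wk_def)
  have xW: "x \<in> Wk (Suc k)" unfolding x_def by (rule ins_in[OF w c])
  define u where "u = a @ (if e0 then [0] else [])"
  define s where "s = (if e1 then [0] else []) @ b"
  have xus: "x = u @ Suc k # s" unfolding x_def u_def s_def ins_def by simp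
  have le: "y \<in> set u \<Longrightarrow> y \<le> k" "y \<in> set s \<Longrightarrow> y \<le> k" for y
    using sw wab by (auto simp: u_def s_def split: if_splits)
  have mu: "Suc k \<notin> set u" using le by (meson Suc_n_not_le_n)
  have une: "u \<noteq> []" and sne: "s \<noteq> []" using v0 v1 by (auto simp: u_def s_def)
  have xp: "hd x = 0" "last x = 0" "noadj x" using xW by (auto simp: Wk_def)
  have hu: "hd u = 0" using xp(1) une xus by simp
  have ls: "last s = 0" using xp(2) xus sne by simp
  have nu: "noadj u" "noadj s" using xp(3) xus by (auto simp: noadj_append noadj_Cons)
  have "UL x (Suc k) = pc (\<lambda>x y. small (Suc k) x \<and> big (Suc k) y) u"
    unfolding xus stats_split[OF mu] ..
  also have "\<dots> = pc (\<lambda>x y. x \<noteq> 0 \<and> y = 0) u"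
    by (rule pc_cong) (auto simp: small_def big_def dest: le(1))
  also have "\<dots> = count_list u 0 - 1" using count_first[OF nu(1)] une hu by simp
  finally show "UL x (Suc k) = count_list a 0 + (if e0 then 1 else 0) - 1" by (simp add: u_def)
  have "DR x (Suc k) = pc (\<lambda>x y. big (Suc k) x \<and> small (Suc k) y) s"
    unfolding xus stats_split[OF mu] ..
  also have "\<dots> = pc (\<lambda>x y. x = 0 \<and> y \<noteq> 0) s"
    by (rule pc_cong) (auto simp: small_def big_def dest: le(2))
  also have "\<dots> = count_list s 0 - 1" using count_last[OF nu(2)] sne ls by simp
  finally show "DR x (Suc k) = count_list b 0 + (if e1 then 1 else 0) - 1" by (simp add: s_def)
  have hb: "b \<noteq> [] \<Longrightarrow> hd b \<noteq> 0" using nw wab by (simp add: noadj_append noadj_Cons)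
  have hbk: "b \<noteq> [] \<Longrightarrow> hd b \<le> k" using sw wab by auto
  show "DB x (Suc k) = (if e1 then 0 else 1)"
    unfolding xus stats_split[OF mu] using v1 hb hbk sne
    by (cases e1) (auto simp: s_def small_def)
qed

lemma wt_ins:
  assumes w: "w \<in> Wk k" and c: "((a, b), (e0, e1)) \<in> Ch w"
  shows "wt p q t (ins (Suc k) ((a, b), (e0, e1))) = wt p q t w *
    (p ^ (count_list a 0 + (if e0 then 1 else 0) - 1) *
     q ^ (count_list b 0 + (if e1 then 1 else 0) - 1) * t ^ (if e1 then 0 else 1))"
proof -
  let ?x = "ins (Suc k) ((a, b), (e0, e1))"
  have wab: "w = a @ 0 # b" using c by (auto simp: Ch_def SP_def)
  have sw: "set w = {0..k}" using w by (auto simp: Wk_def)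
  have sx: "set ?x - {0} = insert (Suc k) (set w - {0})" using wab by (auto simp: ins_def)
  have mn: "Suc k \<notin> set w - {0}" using sw by auto
  have "wt p q t ?x = trm p q t ?x (Suc k) * (\<Prod>v\<in>set w - {0}. trm p q t ?x v)"
    unfolding wt_def sx using mn by simp
  also have "(\<Prod>v\<in>set w - {0}. trm p q t ?x v) = wt p q t w"
    unfolding wt_def
  proof (rule prod.cong[OF refl])
    fix v assume "v \<in> set w - {0}"
    then have "UL ?x v = UL w v \<and> DR ?x v = DR w v \<and> DB ?x v = DB w v"
      using loc_same[OF w c, of v] by auto
    then show "trm p q t ?x v = trm p q t w v" by (simp add: trm_def)
  qed
  finally show ?thesis using loc_new[OF w c] by (simp add: trm_def mult.commute)
qed



definition br :: "'a::comm_semiring_1 \<Rightarrow> 'a \<Rightarrow> nat \<Rightarrow> 'a" where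
  "br p q N = (\<Sum>i<N. p ^ i * q ^ (N - 1 - i))"

lemma br_sym: "br p q N = br q p N"
proof -
  have "br q p N = (\<Sum>i<N. q ^ (N - Suc i) * p ^ (N - 1 - (N - Suc i)))"
    unfolding br_def by (rule sum.nat_diff_reindex[symmetric])
  also have "\<dots> = br p q N" unfolding br_def
    by (rule sum.cong) (auto simp: mult.commute)
  finally show ?thesis ..
qed

lemma P2: "(\<Sum>i<z. if i \<noteq> z - 1 then p ^ i * q ^ (z - 2 - i) * c else 0) = br p q (z - 1) * (c::'a::comm_semiring_1)"
proof (cases z)
  case 0 then show ?thesis by (simp add: br_def)
next
  case (Suc n)
  have "(\<Sum>i<z. if i \<noteq> z - 1 then p ^ i * q ^ (z - 2 - i) * c else 0) = (\<Sum>i<n. p ^ i * q ^ (n - 1 - i) * c)"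
    unfolding Suc by (simp add: sum.lessThan_Suc)
  also have "\<dots> = br p q (z - 1) * c" unfolding br_def Suc by (simp add: sum_distrib_right)
  finally show ?thesis .
qed

lemma P3: "(\<Sum>i<z. if i \<noteq> 0 then p ^ (i - 1) * q ^ (z - 1 - i) * c else 0) = br p q (z - 1) * (c::'a::comm_semiring_1)"
proof (cases z)
  case 0 then show ?thesis by (simp add: br_def)
next
  case (Suc n)
  have "(\<Sum>i<z. if i \<noteq> 0 then p ^ (i - 1) * q ^ (z - 1 - i) * c else 0) = (\<Sum>i<n. p ^ i * q ^ (n - 1 - i) * c)"
    unfolding Suc sum.lessThan_Suc_shift by simp
  also have "\<dots> = br p q (z - 1) * c" unfolding br_def Suc by (simp add: sum_distrib_right)
  finally show ?thesis .
qed

lemma P4: "(\<Sum>i<z. if i \<noteq> 0 \<and> i \<noteq> z - 1 then p ^ (i - 1) * q ^ (z - 2 - i) * c else 0) = br p q (z - 2) * (c::'a::comm_semiring_1)"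
proof (cases z)
  case 0 then show ?thesis by (simp add: br_def)
next
  case (Suc n)
  have "(\<Sum>i<z. if i \<noteq> 0 \<and> i \<noteq> z - 1 then p ^ (i - 1) * q ^ (z - 2 - i) * c else 0) =
     (\<Sum>i<n. if i \<noteq> n - 1 then p ^ i * q ^ (n - 2 - i) * c else 0)"
    unfolding Suc sum.lessThan_Suc_shift by (auto intro!: sum.cong)
  also have "\<dots> = br p q (z - 2) * c" using P2[of n p q c] Suc by simp
  finally show ?thesis .
qed

definition hterm :: "'a::comm_semiring_1 \<Rightarrow> 'a \<Rightarrow> 'a \<Rightarrow> (nat \<Rightarrow> 'a) \<Rightarrow> nat \<Rightarrow> nat \<Rightarrow> 'a" where
  "hterm p q t G z i = p ^ i * q ^ (z - 1 - i) * G (z + 1)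
     + (if i \<noteq> z - 1 then p ^ i * q ^ (z - 2 - i) * (t * G z) else 0)
     + (if i \<noteq> 0 then p ^ (i - 1) * q ^ (z - 1 - i) * G z else 0)
     + (if i \<noteq> 0 \<and> i \<noteq> z - 1 then p ^ (i - 1) * q ^ (z - 2 - i) * (t * G (z - 1)) else 0)"

definition Hp :: "'a::comm_semiring_1 \<Rightarrow> 'a \<Rightarrow> 'a \<Rightarrow> (nat \<Rightarrow> 'a) \<Rightarrow> nat \<Rightarrow> 'a" where
  "Hp p q t G z = (\<Sum>i<z. hterm p q t G z i)"

lemma Hp_closed: "Hp p q t G z = br p q z * G (z + 1) + br p q (z - 1) * (t * G z)
   + br p q (z - 1) * G z + br p q (z - 2) * (t * G (z - 1))"
proof -
  have "Hp p q t G z = (\<Sum>i<z. p ^ i * q ^ (z - 1 - i) * G (z + 1))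
     + (\<Sum>i<z. if i \<noteq> z - 1 then p ^ i * q ^ (z - 2 - i) * (t * G z) else 0)
     + (\<Sum>i<z. if i \<noteq> 0 then p ^ (i - 1) * q ^ (z - 1 - i) * G z else 0)
     + (\<Sum>i<z. if i \<noteq> 0 \<and> i \<noteq> z - 1 then p ^ (i - 1) * q ^ (z - 2 - i) * (t * G (z - 1)) else 0)"
    unfolding Hp_def hterm_def by (simp add: sum.distrib)
  then show ?thesis unfolding P2 P3 P4 by (simp add: br_def sum_distrib_right)
qed

lemma Hp_sym: "Hp p q t G z = Hp q p t G z"
  unfolding Hp_closed br_sym[of p q] ..

lemma UNIV_bb: "(UNIV :: (bool \<times> bool) set) = {(True, True), (True, False), (False, True), (False, False)}"
  by auto

lemma sum_bb: "(\<Sum>e\<in>UNIV. f e) = f (True, True) + f (True, False) + f (False, True) + (f (False, False) :: 'a::comm_monoid_add)"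
  by (simp add: UNIV_bb add.assoc)

lemma per_split:
  assumes w: "w \<in> Wk k" and ab: "(a, b) \<in> SP w"
  shows "(\<Sum>e\<in>UNIV. if (case ((a, b), e) of ((a, b), (e0, e1)) \<Rightarrow> (\<not> e0 \<longrightarrow> a \<noteq> []) \<and> (\<not> e1 \<longrightarrow> b \<noteq> []))
      then wt p q t (ins (Suc k) ((a, b), e)) * G (count_list (ins (Suc k) ((a, b), e)) 0) else 0)
    = wt p q t w * hterm p q t G (count_list w 0) (count_list a 0)"
proof -
  have wab: "w = a @ 0 # b" using ab by (simp add: SP_def)
  have hw: "hd w = 0" "last w = 0" using w by (auto simp: Wk_def)
  define i where "i = count_list a 0"
  define z where "z = count_list w 0"
  have zi: "z = i + 1 + count_list b 0" unfolding z_def i_def wab by simp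
  have cb: "count_list b 0 = z - 1 - i" using zi by simp
  have an: "a \<noteq> [] \<longleftrightarrow> i \<noteq> 0"
  proof
    assume "a \<noteq> []" then have "hd a = 0" using hw wab by simp
    then show "i \<noteq> 0" using \<open>a \<noteq> []\<close> unfolding i_def by (cases a) auto
  qed (auto simp: i_def)
  have bn: "b \<noteq> [] \<longleftrightarrow> i \<noteq> z - 1"
  proof
    assume "b \<noteq> []" then have "last b = 0" using hw wab by simp
    then have "count_list b 0 \<noteq> 0" using \<open>b \<noteq> []\<close>
      by (metis append_butlast_last_id count_list_0_iff last_in_set)
    then show "i \<noteq> z - 1" using zi by simp
  qed (use zi in auto)
  have C: "((a, b), (e0, e1)) \<in> Ch w \<longleftrightarrow> (\<not> e0 \<longrightarrow> a \<noteq> []) \<and> (\<not> e1 \<longrightarrow> b \<noteq> [])" for e0 e1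
    using ab by (simp add: Ch_def)
  have cnt: "count_list (ins (Suc k) ((a, b), (e0, e1))) 0 = i + count_list b 0 + (if e0 then 1 else 0) + (if e1 then 1 else 0)" for e0 e1
    unfolding ins_def i_def by simp
  have iz: "i < z" using zi by simp
  have cnt2: "count_list (ins (Suc k) ((a, b), (e0, e1))) 0 = z - 1 + (if e0 then 1 else 0) + (if e1 then 1 else 0)" for e0 e1
    using cnt[of e0 e1] cb iz by simp
  have ca: "count_list a 0 = i" by (simp add: i_def)
  have W1: "((a, b), (e0, e1)) \<in> Ch w \<Longrightarrow> wt p q t (ins (Suc k) ((a, b), (e0, e1))) = wt p q t w *
    (p ^ (i + (if e0 then 1 else 0) - 1) * q ^ (z - 1 - i + (if e1 then 1 else 0) - 1) * t ^ (if e1 then 0 else 1))" for e0 e1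
    using wt_ins[OF w, of a b e0 e1 p q t] unfolding ca cb .
  have ez: "z - 1 - i + 0 - 1 = z - 2 - i" by arith
  have TT: "wt p q t (ins (Suc k) ((a, b), (True, True))) * G (count_list (ins (Suc k) ((a, b), (True, True))) 0)
     = wt p q t w * (p ^ i * q ^ (z - 1 - i) * G (z + 1))"
  proof -
    have "((a, b), (True, True)) \<in> Ch w" using C by simp
    from W1[OF this] have 1: "wt p q t (ins (Suc k) ((a, b), (True, True))) = wt p q t w * (p ^ i * q ^ (z - 1 - i))"
      by simp
    have 2: "count_list (ins (Suc k) ((a, b), (True, True))) 0 = z + 1" using cnt2[of True True] iz by simp
    show ?thesis unfolding 1 2 by (simp only: mult.assoc)
  qed
  have TF: "i \<noteq> z - 1 \<Longrightarrow> wt p q t (ins (Suc k) ((a, b), (True, False))) * G (count_list (ins (Suc k) ((a, b), (True, False))) 0)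
     = wt p q t w * (p ^ i * q ^ (z - 2 - i) * (t * G z))"
  proof -
    assume h: "i \<noteq> z - 1"
    have "((a, b), (True, False)) \<in> Ch w" using C bn h by simp
    from W1[OF this] have 1: "wt p q t (ins (Suc k) ((a, b), (True, False))) = wt p q t w * (p ^ i * q ^ (z - 2 - i) * t)"
      using ez by simp
    have 2: "count_list (ins (Suc k) ((a, b), (True, False))) 0 = z" using cnt2[of True False] iz by simp
    show ?thesis unfolding 1 2 by (simp only: mult.assoc)
  qed
  have FT: "i \<noteq> 0 \<Longrightarrow> wt p q t (ins (Suc k) ((a, b), (False, True))) * G (count_list (ins (Suc k) ((a, b), (False, True))) 0)
     = wt p q t w * (p ^ (i - 1) * q ^ (z - 1 - i) * G z)"
  proof -
    assume h: "i \<noteq> 0"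
    have "((a, b), (False, True)) \<in> Ch w" using C an h by simp
    from W1[OF this] have 1: "wt p q t (ins (Suc k) ((a, b), (False, True))) = wt p q t w * (p ^ (i - 1) * q ^ (z - 1 - i))"
      by simp
    have 2: "count_list (ins (Suc k) ((a, b), (False, True))) 0 = z" using cnt2[of False True] iz by simp
    show ?thesis unfolding 1 2 by (simp only: mult.assoc)
  qed
  have FF: "i \<noteq> 0 \<Longrightarrow> i \<noteq> z - 1 \<Longrightarrow> wt p q t (ins (Suc k) ((a, b), (False, False))) * G (count_list (ins (Suc k) ((a, b), (False, False))) 0)
     = wt p q t w * (p ^ (i - 1) * q ^ (z - 2 - i) * (t * G (z - 1)))"
  proof -
    assume h: "i \<noteq> 0" "i \<noteq> z - 1"
    have "((a, b), (False, False)) \<in> Ch w" using C an bn h by simp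
    from W1[OF this] have 1: "wt p q t (ins (Suc k) ((a, b), (False, False))) = wt p q t w * (p ^ (i - 1) * q ^ (z - 2 - i) * t)"
      using ez by simp
    have 2: "count_list (ins (Suc k) ((a, b), (False, False))) 0 = z - 1" using cnt2[of False False] iz by simp
    show ?thesis unfolding 1 2 by (simp only: mult.assoc)
  qed
  let ?Q = "\<lambda>e. wt p q t (ins (Suc k) ((a, b), e)) * G (count_list (ins (Suc k) ((a, b), e)) 0)"
  have S: "(\<Sum>e\<in>UNIV. if (case ((a, b), e) of ((a, b), (e0, e1)) \<Rightarrow> (\<not> e0 \<longrightarrow> a \<noteq> []) \<and> (\<not> e1 \<longrightarrow> b \<noteq> []))
      then ?Q e else 0) = ?Q (True, True) + (if b \<noteq> [] then ?Q (True, False) else 0)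
       + (if a \<noteq> [] then ?Q (False, True) else 0) + (if a \<noteq> [] \<and> b \<noteq> [] then ?Q (False, False) else 0)"
    unfolding sum_bb by simp
  also have "\<dots> = ?Q (True, True) + (if i \<noteq> z - 1 then ?Q (True, False) else 0)
       + (if i \<noteq> 0 then ?Q (False, True) else 0) + (if i \<noteq> 0 \<and> i \<noteq> z - 1 then ?Q (False, False) else 0)"
    by (simp only: an bn)
  also have "\<dots> = wt p q t w * hterm p q t G z i"
    unfolding hterm_def distrib_left
    apply (cases "i = 0"; cases "i = z - 1")
    apply (simp_all only: TT TF FT FF if_True if_False simp_thms mult_zero_right add_0_right)
    done
  finally show ?thesis unfolding i_def z_def .
qed



lemma inner:
  assumes w: "w \<in> Wk k"
  shows "(\<Sum>c\<in>Ch w. wt p q t (ins (Suc k) c) * G (count_list (ins (Suc k) c) 0))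
    = wt p q t w * Hp p q t G (count_list w 0)"
proof -
  let ?f = "\<lambda>c. wt p q t (ins (Suc k) c) * G (count_list (ins (Suc k) c) 0)"
  let ?P = "\<lambda>c. case c of ((a, b), (e0, e1)) \<Rightarrow> (\<not> e0 \<longrightarrow> a \<noteq> []) \<and> (\<not> e1 \<longrightarrow> b \<noteq> [])"
  have fin: "finite (SP w \<times> (UNIV :: (bool \<times> bool) set))" using SP_finite by auto
  have "(\<Sum>c\<in>Ch w. ?f c) = (\<Sum>c\<in>SP w \<times> UNIV. if ?P c then ?f c else 0)"
    unfolding Ch_def by (rule sum.inter_filter[OF fin])
  also have "\<dots> = (\<Sum>(ab, e)\<in>SP w \<times> UNIV. if ?P (ab, e) then ?f (ab, e) else 0)"
    by (rule sum.cong[OF refl]) (auto split: prod.splits)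
  also have "\<dots> = (\<Sum>ab\<in>SP w. \<Sum>e\<in>UNIV. if ?P (ab, e) then ?f (ab, e) else 0)"
    by (rule sum.cartesian_product[symmetric])
  also have "\<dots> = (\<Sum>ab\<in>SP w. wt p q t w * hterm p q t G (count_list w 0) (count_list (fst ab) 0))"
  proof (rule sum.cong[OF refl])
    fix ab assume "ab \<in> SP w"
    then obtain a b where ab: "ab = (a, b)" "(a, b) \<in> SP w" by (cases ab) auto
    show "(\<Sum>e\<in>UNIV. if ?P (ab, e) then ?f (ab, e) else 0) =
        wt p q t w * hterm p q t G (count_list w 0) (count_list (fst ab) 0)"
      unfolding ab(1) using per_split[OF w ab(2), of p q t G] by simp
  qed
  also have "\<dots> = wt p q t w * (\<Sum>ab\<in>SP w. hterm p q t G (count_list w 0) ((\<lambda>(a, b). count_list a 0) ab))"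
    by (simp add: sum_distrib_left case_prod_beta)
  also have "(\<Sum>ab\<in>SP w. hterm p q t G (count_list w 0) ((\<lambda>(a, b). count_list a 0) ab))
      = (\<Sum>i<count_list w 0. hterm p q t G (count_list w 0) i)"
    by (rule sum.reindex_bij_betw[OF SP_bij])
  finally show ?thesis unfolding Hp_def .
qed

lemma step_sum:
  "(\<Sum>w\<in>Wk (Suc k). wt p q t w * G (count_list w 0)) = (\<Sum>w\<in>Wk k. wt p q t w * Hp p q t G (count_list w 0))"
proof -
  let ?F = "\<lambda>w. wt p q t w * G (count_list w 0)"
  have "(\<Sum>w\<in>Wk (Suc k). ?F w) = (\<Sum>x\<in>Sigma (Wk k) Ch. ?F ((\<lambda>(w, c). ins (Suc k) c) x))"
    by (rule sum.reindex_bij_betw[OF W_bij, symmetric])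
  also have "\<dots> = (\<Sum>w\<in>Wk k. \<Sum>c\<in>Ch w. ?F (ins (Suc k) c))"
    by (subst sum.Sigma[OF W_finite]) (auto simp: Ch_finite case_prod_beta)
  also have "\<dots> = (\<Sum>w\<in>Wk k. wt p q t w * Hp p q t G (count_list w 0))"
    by (rule sum.cong[OF refl]) (rule inner)
  finally show ?thesis .
qed

lemma main_sym:
  "(\<Sum>w\<in>Wk k. wt p q t w * G (count_list w 0)) = (\<Sum>w\<in>Wk k. wt q p t w * G (count_list w 0))"
proof (induction k arbitrary: G)
  case 0
  then show ?case by (simp add: W0 wt_def)
next
  case (Suc k)
  have "(\<Sum>w\<in>Wk (Suc k). wt p q t w * G (count_list w 0)) = (\<Sum>w\<in>Wk k. wt p q t w * Hp p q t G (count_list w 0))"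
    by (rule step_sum)
  also have "\<dots> = (\<Sum>w\<in>Wk k. wt q p t w * Hp p q t G (count_list w 0))"
    by (rule Suc.IH)
  also have "\<dots> = (\<Sum>w\<in>Wk k. wt q p t w * Hp q p t G (count_list w 0))"
    by (simp add: Hp_sym[of p q])
  also have "\<dots> = (\<Sum>w\<in>Wk (Suc k). wt q p t w * G (count_list w 0))"
    by (rule step_sum[symmetric])
  finally show ?case .
qed



lemma pc_zip: "pc P xs = length (filter (\<lambda>(x, y). P x y) (zip xs (tl xs)))"
  by (induction P xs rule: pc.induct) auto

lemma pc_card: "pc P xs = card {i. Suc i < length xs \<and> P (xs ! i) (xs ! Suc i)}"
  unfolding pc_zip length_filter_conv_card
  by (rule arg_cong[where f = card]) (auto simp: nth_tl)

lemma nth_notin_take: "distinct xs \<Longrightarrow> j < length xs \<Longrightarrow> xs ! j \<notin> set (take j xs)"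
proof -
  assume a: "distinct xs" "j < length xs"
  have "distinct (take j xs @ xs ! j # drop (Suc j) xs)"
    by (subst id_take_nth_drop[OF a(2), symmetric]) (rule a(1))
  then show ?thesis by simp
qed

lemma w_split:
  assumes "distinct \<pi>" "j < length \<pi>" "0 \<notin> set \<pi>"
  shows "0 # \<pi> @ [0] = (0 # take j \<pi>) @ (\<pi> ! j) # (drop (Suc j) \<pi> @ [0])"
    "\<pi> ! j \<notin> set (0 # take j \<pi>)"
proof -
  show "0 # \<pi> @ [0] = (0 # take j \<pi>) @ (\<pi> ! j) # (drop (Suc j) \<pi> @ [0])"
  proof -
    have "(0 # take j \<pi>) @ (\<pi> ! j) # (drop (Suc j) \<pi> @ [0]) = 0 # (take j \<pi> @ \<pi> ! j # drop (Suc j) \<pi>) @ [0]"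
      by simp
    then show ?thesis by (simp only: id_take_nth_drop[OF assms(2), symmetric])
  qed
  have "\<pi> ! j \<noteq> 0" using assms(2,3) nth_mem by fastforce
  then show "\<pi> ! j \<notin> set (0 # take j \<pi>)" using nth_notin_take[OF assms(1,2)] by simp
qed

lemma UL_pi:
  assumes "distinct \<pi>" "j < length \<pi>" "0 \<notin> set \<pi>"
  shows "UL (0 # \<pi> @ [0]) (\<pi> ! j) = card {i. Suc i < j \<and> \<pi> ! i < \<pi> ! j \<and> \<pi> ! j < \<pi> ! Suc i}"
proof -
  let ?v = "\<pi> ! j"
  have "UL (0 # \<pi> @ [0]) ?v = pc (\<lambda>x y. small ?v x \<and> big ?v y) (0 # take j \<pi>)"
    unfolding w_split(1)[OF assms] stats_split(1)[OF w_split(2)[OF assms]] ..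
  also have "\<dots> = pc (\<lambda>x y. small ?v x \<and> big ?v y) (take j \<pi>)"
    by (simp add: pc_Cons small_def)
  also have "\<dots> = pc (\<lambda>x y. x < ?v \<and> ?v < y) (take j \<pi>)"
  proof (rule pc_cong)
    fix x y assume "x \<in> set (take j \<pi>)" "y \<in> set (take j \<pi>)"
    then have "x \<noteq> 0" "y \<noteq> 0" using assms(3) by (metis in_set_takeD)+
    then show "(small ?v x \<and> big ?v y) = (x < ?v \<and> ?v < y)" by (auto simp: small_def big_def)
  qed
  also have "\<dots> = card {i. Suc i < j \<and> \<pi> ! i < \<pi> ! j \<and> \<pi> ! j < \<pi> ! Suc i}"
    unfolding pc_card
  proof (intro arg_cong[where f = card] Collect_cong)
    fix i
    show "(Suc i < length (take j \<pi>) \<and> take j \<pi> ! i < ?v \<and> ?v < take j \<pi> ! Suc i) =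
      (Suc i < j \<and> \<pi> ! i < ?v \<and> ?v < \<pi> ! Suc i)"
      using assms(2) by (cases "Suc i < j") simp_all
  qed
  finally show ?thesis .
qed

lemma DR_pi:
  assumes "distinct \<pi>" "j < length \<pi>" "0 \<notin> set \<pi>"
  shows "DR (0 # \<pi> @ [0]) (\<pi> ! j) = card {l. Suc l < length \<pi> - Suc j \<and> \<pi> ! j < \<pi> ! (Suc j + l) \<and> \<pi> ! (Suc j + Suc l) < \<pi> ! j}"
proof -
  let ?v = "\<pi> ! j"
  have "DR (0 # \<pi> @ [0]) ?v = pc (\<lambda>x y. big ?v x \<and> small ?v y) (drop (Suc j) \<pi> @ [0])"
    unfolding w_split(1)[OF assms] stats_split(2)[OF w_split(2)[OF assms]] ..
  also have "\<dots> = pc (\<lambda>x y. big ?v x \<and> small ?v y) (drop (Suc j) \<pi>)"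
    by (simp add: pc_append small_def)
  also have "\<dots> = pc (\<lambda>x y. ?v < x \<and> y < ?v) (drop (Suc j) \<pi>)"
  proof (rule pc_cong)
    fix x y assume "x \<in> set (drop (Suc j) \<pi>)" "y \<in> set (drop (Suc j) \<pi>)"
    then have "x \<noteq> 0" "y \<noteq> 0" using assms(3) by (metis in_set_dropD)+
    then show "(big ?v x \<and> small ?v y) = (?v < x \<and> y < ?v)" by (auto simp: small_def big_def)
  qed
  also have "\<dots> = card {l. Suc l < length \<pi> - Suc j \<and> \<pi> ! j < \<pi> ! (Suc j + l) \<and> \<pi> ! (Suc j + Suc l) < \<pi> ! j}"
    unfolding pc_card
  proof (intro arg_cong[where f = card] Collect_cong)
    fix l
    show "(Suc l < length (drop (Suc j) \<pi>) \<and> ?v < drop (Suc j) \<pi> ! l \<and> drop (Suc j) \<pi> ! Suc l < ?v) =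
      (Suc l < length \<pi> - Suc j \<and> ?v < \<pi> ! (Suc j + l) \<and> \<pi> ! (Suc j + Suc l) < ?v)"
      using assms(2) by (cases "Suc l < length \<pi> - Suc j") simp_all
  qed
  finally show ?thesis .
qed

lemma DB_pi:
  assumes "distinct \<pi>" "j < length \<pi>" "0 \<notin> set \<pi>"
  shows "DB (0 # \<pi> @ [0]) (\<pi> ! j) = of_bool (Suc j < length \<pi> \<and> \<pi> ! Suc j < \<pi> ! j)"
  unfolding w_split(1)[OF assms] stats_split(3)[OF w_split(2)[OF assms]]
proof (cases "Suc j < length \<pi>")
  case True
  have nz: "\<pi> ! Suc j \<noteq> 0" using assms(3) True nth_mem by metis
  have d: "drop (Suc j) \<pi> = \<pi> ! Suc j # drop (Suc (Suc j)) \<pi>" by (rule Cons_nth_drop_Suc[OF True, symmetric])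
  show "(if drop (Suc j) \<pi> @ [0] \<noteq> [] \<and> small (\<pi> ! j) (hd (drop (Suc j) \<pi> @ [0])) then 1 else 0) =
      of_bool (Suc j < length \<pi> \<and> \<pi> ! Suc j < \<pi> ! j)"
    unfolding d using True nz by (simp add: small_def)
next
  case False
  then have d: "drop (Suc j) \<pi> = []" by simp
  show "(if drop (Suc j) \<pi> @ [0] \<noteq> [] \<and> small (\<pi> ! j) (hd (drop (Suc j) \<pi> @ [0])) then 1 else 0) =
      of_bool (Suc j < length \<pi> \<and> \<pi> ! Suc j < \<pi> ! j)"
    unfolding d using False by (simp add: small_def)
qed

lemma pat132_sum:
  assumes "distinct \<pi>" "0 \<notin> set \<pi>"
  shows "pat_13_2 \<pi> = (\<Sum>j<length \<pi>. UL (0 # \<pi> @ [0]) (\<pi> ! j))"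
proof -
  let ?n = "length \<pi>"
  let ?B = "\<lambda>j. {i. Suc i < j \<and> \<pi> ! i < \<pi> ! j \<and> \<pi> ! j < \<pi> ! Suc i}"
  have fin: "finite (?B j)" for j by (rule finite_subset[of _ "{..<j}"]) auto
  have "{(i, j). 2 \<le> i \<and> i < j \<and> j \<le> ?n \<and> \<pi> ! (i - 2) < \<pi> ! (j - 1) \<and> \<pi> ! (j - 1) < \<pi> ! (i - 1)}
      = (\<lambda>(j, i). (i + 2, j + 1)) ` (SIGMA j:{..<?n}. ?B j)"
  proof (rule set_eqI, rule iffI)
    fix x assume "x \<in> {(i, j). 2 \<le> i \<and> i < j \<and> j \<le> ?n \<and> \<pi> ! (i - 2) < \<pi> ! (j - 1) \<and> \<pi> ! (j - 1) < \<pi> ! (i - 1)}"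
    then obtain i j where x: "x = (i, j)" "2 \<le> i" "i < j" "j \<le> ?n" "\<pi> ! (i - 2) < \<pi> ! (j - 1)" "\<pi> ! (j - 1) < \<pi> ! (i - 1)"
      by auto
    have "(j - 1, i - 2) \<in> (SIGMA j:{..<?n}. ?B j)" using x
      by (auto simp: Suc_diff_Suc numeral_2_eq_2)
    moreover have "x = (\<lambda>(j, i). (i + 2, j + 1)) (j - 1, i - 2)" using x by auto
    ultimately show "x \<in> (\<lambda>(j, i). (i + 2, j + 1)) ` (SIGMA j:{..<?n}. ?B j)" by blast
  next
    fix x assume "x \<in> (\<lambda>(j, i). (i + 2, j + 1)) ` (SIGMA j:{..<?n}. ?B j)"
    then show "x \<in> {(i, j). 2 \<le> i \<and> i < j \<and> j \<le> ?n \<and> \<pi> ! (i - 2) < \<pi> ! (j - 1) \<and> \<pi> ! (j - 1) < \<pi> ! (i - 1)}"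
      by auto
  qed
  moreover have "inj_on (\<lambda>(j, i). (i + 2, j + 1)) (SIGMA j:{..<?n}. ?B j)"
    by (auto simp: inj_on_def)
  ultimately have "pat_13_2 \<pi> = card (SIGMA j:{..<?n}. ?B j)"
    unfolding pat_13_2_def by (simp add: card_image)
  also have "\<dots> = (\<Sum>j<?n. card (?B j))" using fin by simp
  also have "\<dots> = (\<Sum>j<?n. UL (0 # \<pi> @ [0]) (\<pi> ! j))"
    using UL_pi[OF assms(1) _ assms(2)] by simp
  finally show ?thesis .
qed

lemma pat231_sum:
  assumes "distinct \<pi>" "0 \<notin> set \<pi>"
  shows "pat_2_31 \<pi> = (\<Sum>j<length \<pi>. DR (0 # \<pi> @ [0]) (\<pi> ! j))"
proof -
  let ?n = "length \<pi>"
  let ?B = "\<lambda>j. {l. Suc l < ?n - Suc j \<and> \<pi> ! j < \<pi> ! (Suc j + l) \<and> \<pi> ! (Suc j + Suc l) < \<pi> ! j}"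
  have fin: "finite (?B j)" for j by (rule finite_subset[of _ "{..<?n}"]) auto
  have "{(i, j). 1 \<le> i \<and> i < j \<and> j \<le> ?n - 1 \<and> \<pi> ! j < \<pi> ! (i - 1) \<and> \<pi> ! (i - 1) < \<pi> ! (j - 1)}
      = (\<lambda>(j, l). (j + 1, j + l + 2)) ` (SIGMA j:{..<?n}. ?B j)"
  proof (rule set_eqI, rule iffI)
    fix x assume "x \<in> {(i, j). 1 \<le> i \<and> i < j \<and> j \<le> ?n - 1 \<and> \<pi> ! j < \<pi> ! (i - 1) \<and> \<pi> ! (i - 1) < \<pi> ! (j - 1)}"
    then obtain i j where x: "x = (i, j)" "1 \<le> i" "i < j" "j \<le> ?n - 1" "\<pi> ! j < \<pi> ! (i - 1)" "\<pi> ! (i - 1) < \<pi> ! (j - 1)"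
      by auto
    have e1: "Suc (i - 1) + (j - i - 1) = j - 1" "Suc (i - 1) + Suc (j - i - 1) = j" using x by auto
    have "(i - 1, j - i - 1) \<in> (SIGMA j:{..<?n}. ?B j)" using x e1
      by auto
    moreover have "x = (\<lambda>(j, l). (j + 1, j + l + 2)) (i - 1, j - i - 1)" using x by auto
    ultimately show "x \<in> (\<lambda>(j, l). (j + 1, j + l + 2)) ` (SIGMA j:{..<?n}. ?B j)" by blast
  next
    fix x assume "x \<in> (\<lambda>(j, l). (j + 1, j + l + 2)) ` (SIGMA j:{..<?n}. ?B j)"
    then obtain j l where x: "x = (j + 1, j + l + 2)" "j < ?n" "l \<in> ?B j" by auto
    have e: "j + l + 2 - 1 = Suc j + l" "j + l + 2 = Suc j + Suc l" by auto
    show "x \<in> {(i, j). 1 \<le> i \<and> i < j \<and> j \<le> ?n - 1 \<and> \<pi> ! j < \<pi> ! (i - 1) \<and> \<pi> ! (i - 1) < \<pi> ! (j - 1)}"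
      using x unfolding e by auto
  qed
  moreover have "inj_on (\<lambda>(j, l). (j + 1, j + l + 2)) (SIGMA j:{..<?n}. ?B j)"
    by (auto simp: inj_on_def)
  ultimately have "pat_2_31 \<pi> = card (SIGMA j:{..<?n}. ?B j)"
    unfolding pat_2_31_def by (simp add: card_image)
  also have "\<dots> = (\<Sum>j<?n. card (?B j))" using fin by simp
  also have "\<dots> = (\<Sum>j<?n. DR (0 # \<pi> @ [0]) (\<pi> ! j))"
    using DR_pi[OF assms(1) _ assms(2)] by simp
  finally show ?thesis .
qed

lemma des_sum:
  assumes "distinct \<pi>" "0 \<notin> set \<pi>"
  shows "des \<pi> = (\<Sum>j<length \<pi>. DB (0 # \<pi> @ [0]) (\<pi> ! j))"
proof -
  let ?n = "length \<pi>"
  have "(\<Sum>j<?n. DB (0 # \<pi> @ [0]) (\<pi> ! j)) = (\<Sum>j<?n. of_bool (Suc j < ?n \<and> \<pi> ! Suc j < \<pi> ! j))"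
    using DB_pi[OF assms(1) _ assms(2)] by simp
  also have "\<dots> = card ({..<?n} \<inter> {j. Suc j < ?n \<and> \<pi> ! Suc j < \<pi> ! j})"
    by simp
  also have "\<dots> = card {i \<in> {1..?n - 1}. \<pi> ! (i - 1) > \<pi> ! i}"
  proof -
    have "{i \<in> {1..?n - 1}. \<pi> ! (i - 1) > \<pi> ! i} = Suc ` ({..<?n} \<inter> {j. Suc j < ?n \<and> \<pi> ! Suc j < \<pi> ! j})"
    proof (rule set_eqI, rule iffI)
      fix i assume i: "i \<in> {i \<in> {1..?n - 1}. \<pi> ! (i - 1) > \<pi> ! i}"
      then have "i - 1 \<in> ({..<?n} \<inter> {j. Suc j < ?n \<and> \<pi> ! Suc j < \<pi> ! j})" by auto
      moreover have "i = Suc (i - 1)" using i by auto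
      ultimately show "i \<in> Suc ` ({..<?n} \<inter> {j. Suc j < ?n \<and> \<pi> ! Suc j < \<pi> ! j})" by blast
    qed auto
    then show ?thesis by (simp add: card_image)
  qed
  finally show ?thesis unfolding des_def by simp
qed



lemma wt_pi:
  assumes "distinct \<pi>" "0 \<notin> set \<pi>"
  shows "wt p q t (0 # \<pi> @ [0]) = p ^ pat_13_2 \<pi> * q ^ pat_2_31 \<pi> * t ^ des \<pi>"
proof -
  let ?w = "0 # \<pi> @ [0]"
  have s: "set ?w - {0} = set \<pi>" using assms(2) by auto
  have "wt p q t ?w = (\<Prod>v\<in>set \<pi>. trm p q t ?w v)" unfolding wt_def s ..
  also have "\<dots> = prod_list (map (trm p q t ?w) \<pi>)" by (rule prod.distinct_set_conv_list[OF assms(1)])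
  also have "\<dots> = (\<Prod>j\<in>{0..<length \<pi>}. map (trm p q t ?w) \<pi> ! j)"
    using prod.list_conv_set_nth[of "map (trm p q t ?w) \<pi>"] by simp
  also have "\<dots> = (\<Prod>j<length \<pi>. trm p q t ?w (\<pi> ! j))"
    by (simp add: atLeast0LessThan)
  also have "\<dots> = (\<Prod>j<length \<pi>. p ^ UL ?w (\<pi> ! j)) * (\<Prod>j<length \<pi>. q ^ DR ?w (\<pi> ! j)) * (\<Prod>j<length \<pi>. t ^ DB ?w (\<pi> ! j))"
    by (simp add: trm_def prod.distrib)
  also have "\<dots> = p ^ pat_13_2 \<pi> * q ^ pat_2_31 \<pi> * t ^ des \<pi>"
    unfolding pat132_sum[OF assms] pat231_sum[OF assms] des_sum[OF assms] power_sum ..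
  finally show ?thesis .
qed

lemma noadj_nz: "0 \<notin> set xs \<Longrightarrow> noadj xs"
  by (induction xs rule: noadj.induct) auto

lemma W_perms:
  assumes "n \<ge> 1"
  shows "{w \<in> Wk n. count_list w 0 = 2} = (\<lambda>\<pi>. 0 # \<pi> @ [0]) ` perms n"
proof (rule set_eqI, rule iffI)
  fix w assume "w \<in> {w \<in> Wk n. count_list w 0 = 2}"
  then have w: "w \<noteq> []" "hd w = 0" "last w = 0" "distinct (filter (\<lambda>x. x \<noteq> 0) w)" "set w = {0..n}" "count_list w 0 = 2"
    by (auto simp: Wk_def)
  obtain w1 where w1: "w = 0 # w1" using w(1,2) by (cases w) auto
  have "w1 \<noteq> []" using w(6) w1 by auto
  then have "w1 = butlast w1 @ [0]" using w(3) w1 by (metis append_butlast_last_id last_ConsR)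
  then obtain \<pi> where pi: "w = 0 # \<pi> @ [0]" using w1 by metis
  have "count_list \<pi> 0 = 0" using w(6) pi by simp
  then have nz: "0 \<notin> set \<pi>" by (simp add: count_list_0_iff)
  have fp: "filter (\<lambda>x. x \<noteq> 0) \<pi> = \<pi>" using nz by (metis (mono_tags, lifting) filter_True)
  have "filter (\<lambda>x. x \<noteq> 0) w = \<pi>" using pi fp by simp
  then have "distinct \<pi>" using w(4) by simp
  moreover have "set \<pi> = {1..n}"
  proof -
    have "set \<pi> = insert 0 (set \<pi>) - {0}" using nz by simp
    also have "insert 0 (set \<pi>) = {0..n}" using w(5) pi by simp
    also have "{0..n} - {0} = {1..n}" by auto
    finally show ?thesis .
  qed
  ultimately have "\<pi> \<in> perms n" unfolding perms_def by (simp add: permutations_of_set_def)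
  then show "w \<in> (\<lambda>\<pi>. 0 # \<pi> @ [0]) ` perms n" using pi by blast
next
  fix w assume "w \<in> (\<lambda>\<pi>. 0 # \<pi> @ [0]) ` perms n"
  then obtain \<pi> where pi: "w = 0 # \<pi> @ [0]" "\<pi> \<in> perms n" by auto
  have d: "distinct \<pi>" "set \<pi> = {1..n}" using pi(2) unfolding perms_def by (auto simp: permutations_of_set_def)
  have nz: "0 \<notin> set \<pi>" using d by auto
  have ne: "\<pi> \<noteq> []" using d assms by auto
  have hl: "hd \<pi> \<noteq> 0" "last \<pi> \<noteq> 0" using ne nz hd_in_set last_in_set by metis+
  have "noadj w" unfolding pi(1) using noadj_nz[OF nz] hl ne
    by (simp add: noadj_append noadj_Cons)
  moreover have fp: "filter (\<lambda>x. x \<noteq> 0) \<pi> = \<pi>" using nz by (metis (mono_tags, lifting) filter_True)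
  moreover have "filter (\<lambda>x. x \<noteq> 0) w = \<pi>" using pi fp by simp
  moreover have "set w = {0..n}" using pi d by auto
  moreover have "count_list w 0 = 2" using pi nz by (simp add: count_list_0_iff)
  moreover have "w \<noteq> []" "hd w = 0" "last w = 0" using pi(1) by simp_all
  ultimately show "w \<in> {w \<in> Wk n. count_list w 0 = 2}" using d(1) unfolding Wk_def by simp
qed

lemma A_as_W:
  assumes "n \<ge> 1"
  shows "A_poly n p q t = (\<Sum>w\<in>Wk n. wt p q t w * (if count_list w 0 = 2 then 1 else 0))"
proof -
  have inj: "inj_on (\<lambda>\<pi>. 0 # \<pi> @ [0]) (perms n)" by (auto simp: inj_on_def)
  have "A_poly n p q t = (\<Sum>\<pi>\<in>perms n. wt p q t (0 # \<pi> @ [0]))"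
    unfolding A_poly_def
  proof (rule sum.cong[OF refl])
    fix \<pi> assume "\<pi> \<in> perms n"
    then have "distinct \<pi>" "0 \<notin> set \<pi>" unfolding perms_def by (auto simp: permutations_of_set_def)
    then show "p ^ pat_13_2 \<pi> * q ^ pat_2_31 \<pi> * t ^ des \<pi> = wt p q t (0 # \<pi> @ [0])"
      by (simp add: wt_pi)
  qed
  also have "\<dots> = (\<Sum>w\<in>(\<lambda>\<pi>. 0 # \<pi> @ [0]) ` perms n. wt p q t w)"
    by (simp add: sum.reindex[OF inj])
  also have "\<dots> = (\<Sum>w\<in>{w \<in> Wk n. count_list w 0 = 2}. wt p q t w)"
    unfolding W_perms[OF assms] ..
  also have "\<dots> = (\<Sum>w\<in>Wk n. if count_list w 0 = 2 then wt p q t w else 0)"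
    by (rule sum.inter_filter[OF W_finite])
  also have "\<dots> = (\<Sum>w\<in>Wk n. wt p q t w * (if count_list w 0 = 2 then 1 else 0))"
    by (rule sum.cong) auto
  finally show ?thesis .
qed

theorem proposition5p2:
  fixes n :: nat and p q t :: "'a::comm_semiring_1"
  shows "A_poly n p q t = A_poly n q p t"
proof (cases "n \<ge> 1")
  case True
  show ?thesis unfolding A_as_W[OF True] by (rule main_sym)
next
  case False
  then have n: "n = 0" by simp
  have "perms 0 = {[]}" by (simp add: perms_def)
  moreover have "pat_13_2 [] = 0" unfolding pat_13_2_def by (auto simp: card_eq_0_iff)
  moreover have "pat_2_31 [] = 0" unfolding pat_2_31_def by (auto simp: card_eq_0_iff)
  ultimately show ?thesis unfolding n A_poly_def by simp
qed


end
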